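(* Let $\Bbbk$ be a field, let $\mathrm{Var}$ be a variety of $\Bbbk$-algebras with one binary product defined by polylinear identities, and $\text{tri-}\mathrm{Var}$ the corresponding replicated variety of tri-algebras. Let $X$ be a set, $\dot X$ a disjoint copy of $X$, $F=\mathrm{Var}\langle X\cup\dot X\rangle$, $\varphi:F\to F$ the algebra homomorphism with $\varphi(x)=\varphi(\dot x)=x$, $F^{(3)}$ the space $F$ with operations $f\vdash g=\varphi(f)g$, $f\dashv g=f\varphi(g)$, $f\perp g=fg$, and $V$ the subalgebra of $F^{(3)}$ generated by $\dot X$ (so that $V\cong \text{tri-}\mathrm{Var}\langle X\rangle$ via $\dot x\leftrightarrow x$). Let $S\subseteq V$, and let $(S)^{(3)}$ denote the ideal of the tri-algebra $V$ generated by $S$ (the smallest subspace of $V$ containing $S$ and closed under $v* j$ and $j* v$ for $v\in V$, $j$ in it, $*\in\{\vdash,\dashv,\perp\}$). Then $$(S)^{(3)}=(S\cup\varphi(S))\cap V,$$ where $(P)$ denotes the (two-sided) ideal of the algebra $F$ generated by a subset $P\subseteq F$.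
   Context: Tri-algebras: linear spaces with three bilinear operations $\dashv$ (=$\mu_{\{1\}}$), $\vdash$ (=$\mu_{\{2\}}$), $\perp$ (=$\mu_{\{1,2\}}$). For a polylinear $\Phi(x_1,\dots,x_n)$ in the free algebra with one binary operation $\mu$ and nonempty $H\subseteq\{1,\dots,n\}$, $\Phi_H$ is obtained by viewing each monomial as a binary tree, marking leaves $x_i$, $i\in H$, and replacing $\mu$ at each node by $\mu_S$, $S\subseteq\{1,2\}$ the set of branches containing a marked leaf (by $\mu_{\{1\}}$ if $S=\varnothing$). $\text{tri-}\mathrm{Var}$ consists of tri-algebras satisfying $(a* b)\vdash c=(a\star b)\vdash c$, $a\dashv(b* c)=a\dashv(b\star c)$ for all $*,\star\in\{\vdash,\dashv,\perp\}$, and $\Phi_H=0$ for each defining identity $\Phi$ of $\mathrm{Var}$ and each nonempty $H$. *)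

theory Defs
  imports Main "HOL-Library.Poly_Mapping"
begin

text \<open>Nonassociative monomials = binary trees with leaves labelled by variables.\<close>
datatype 'v mon = Lf 'v | Nd "'v mon" "'v mon"

fun leaves :: "'v mon \<Rightarrow> 'v list" where
  "leaves (Lf v) = [v]"
| "leaves (Nd a b) = leaves a @ leaves b"

type_synonym ('v,'k) nfree = "'v mon \<Rightarrow>\<^sub>0 'k"

definition nsmult :: "'k::field \<Rightarrow> ('v,'k) nfree \<Rightarrow> ('v,'k) nfree" where
  "nsmult c p = Poly_Mapping.map (\<lambda>a. c * a) p"

definition nvar :: "'v \<Rightarrow> ('v,'k::field) nfree" where
  "nvar v = Poly_Mapping.single (Lf v) 1"

definition nmul :: "('v,'k::field) nfree \<Rightarrow> ('v,'k) nfree \<Rightarrow> ('v,'k) nfree" where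
  "nmul p q = (\<Sum>(m,n) \<in> Poly_Mapping.keys p \<times> Poly_Mapping.keys q.
                 Poly_Mapping.single (Nd m n) (Poly_Mapping.lookup p m * Poly_Mapping.lookup q n))"

fun evmon :: "('v \<Rightarrow> ('w,'k::field) nfree) \<Rightarrow> 'v mon \<Rightarrow> ('w,'k) nfree" where
  "evmon \<sigma> (Lf v) = \<sigma> v"
| "evmon \<sigma> (Nd a b) = nmul (evmon \<sigma> a) (evmon \<sigma> b)"

definition neval :: "('v \<Rightarrow> ('w,'k::field) nfree) \<Rightarrow> ('v,'k) nfree \<Rightarrow> ('w,'k) nfree" where
  "neval \<sigma> p = (\<Sum>m \<in> Poly_Mapping.keys p. nsmult (Poly_Mapping.lookup p m) (evmon \<sigma> m))"

definition polylinear :: "nat \<Rightarrow> (nat,'k::field) nfree \<Rightarrow> bool" where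
  "polylinear n \<Phi> \<longleftrightarrow> (\<forall>m \<in> Poly_Mapping.keys \<Phi>. distinct (leaves m) \<and> set (leaves m) = {0..<n})"

inductive_set nideal :: "('v,'k::field) nfree set \<Rightarrow> ('v,'k) nfree set"
  for P :: "('v,'k) nfree set" where
  gen: "p \<in> P \<Longrightarrow> p \<in> nideal P"
| zero: "0 \<in> nideal P"
| add: "a \<in> nideal P \<Longrightarrow> b \<in> nideal P \<Longrightarrow> a + b \<in> nideal P"
| smult: "a \<in> nideal P \<Longrightarrow> nsmult c a \<in> nideal P"
| mulL: "a \<in> nideal P \<Longrightarrow> nmul f a \<in> nideal P"
| mulR: "a \<in> nideal P \<Longrightarrow> nmul a f \<in> nideal P"

text \<open>The verbal (T-)ideal of k{Y} of the variety defined by the identities Ids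
  (pairs (n, \<Phi>) with \<Phi> polylinear in x_0..x_{n-1}): the ideal generated by all values
  \<Phi>(a_0,...,a_{n-1}), a_i \<in> k{Y}.\<close>
definition Tideal :: "(nat \<times> (nat,'k::field) nfree) set \<Rightarrow> ('v,'k) nfree set" where
  "Tideal Ids = nideal {neval \<sigma> \<Phi> | \<sigma> n \<Phi>. (n, \<Phi>) \<in> Ids}"

text \<open>Variables: Inl x is x \<in> X, Inr x is the dotted copy x' \<in> X' (disjoint copy).
  Elements of F are cosets modulo the T-ideal.\<close>
type_synonym ('x,'k) Fel = "('x + 'x, 'k) nfree set"

definition cls :: "(nat \<times> (nat,'k::field) nfree) set \<Rightarrow> ('x + 'x,'k) nfree \<Rightarrow> ('x,'k) Fel" where
  "cls Ids p = {q. q - p \<in> Tideal Ids}"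

definition Fcar :: "(nat \<times> (nat,'k::field) nfree) set \<Rightarrow> ('x,'k) Fel set" where
  "Fcar Ids = range (cls Ids)"

definition rep :: "('x,'k::field) Fel \<Rightarrow> ('x + 'x,'k) nfree" where
  "rep A = (SOME p. p \<in> A)"

definition Fzero :: "(nat \<times> (nat,'k::field) nfree) set \<Rightarrow> ('x,'k) Fel" where
  "Fzero Ids = cls Ids 0"
definition Fadd :: "(nat \<times> (nat,'k::field) nfree) set \<Rightarrow> ('x,'k) Fel \<Rightarrow> ('x,'k) Fel \<Rightarrow> ('x,'k) Fel" where
  "Fadd Ids A B = cls Ids (rep A + rep B)"
definition Fsmult :: "(nat \<times> (nat,'k::field) nfree) set \<Rightarrow> 'k \<Rightarrow> ('x,'k) Fel \<Rightarrow> ('x,'k) Fel" where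
  "Fsmult Ids c A = cls Ids (nsmult c (rep A))"
definition Fmul :: "(nat \<times> (nat,'k::field) nfree) set \<Rightarrow> ('x,'k) Fel \<Rightarrow> ('x,'k) Fel \<Rightarrow> ('x,'k) Fel" where
  "Fmul Ids A B = cls Ids (nmul (rep A) (rep B))"

text \<open>\<phi>: the homomorphism with \<phi>(x) = \<phi>(x') = x (well defined on F since the T-ideal is
  invariant under substitutions).\<close>
definition phi0 :: "('x + 'x,'k::field) nfree \<Rightarrow> ('x + 'x,'k) nfree" where
  "phi0 = neval (\<lambda>y. nvar (Inl (case_sum id id y)))"

definition Fphi :: "(nat \<times> (nat,'k::field) nfree) set \<Rightarrow> ('x,'k) Fel \<Rightarrow> ('x,'k) Fel" where
  "Fphi Ids A = cls Ids (phi0 (rep A))"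

definition Fvdash :: "(nat \<times> (nat,'k::field) nfree) set \<Rightarrow> ('x,'k) Fel \<Rightarrow> ('x,'k) Fel \<Rightarrow> ('x,'k) Fel" where
  "Fvdash Ids A B = Fmul Ids (Fphi Ids A) B"
definition Fdashv :: "(nat \<times> (nat,'k::field) nfree) set \<Rightarrow> ('x,'k) Fel \<Rightarrow> ('x,'k) Fel \<Rightarrow> ('x,'k) Fel" where
  "Fdashv Ids A B = Fmul Ids A (Fphi Ids B)"
definition Fperp :: "(nat \<times> (nat,'k::field) nfree) set \<Rightarrow> ('x,'k) Fel \<Rightarrow> ('x,'k) Fel \<Rightarrow> ('x,'k) Fel" where
  "Fperp Ids A B = Fmul Ids A B"

definition triops :: "(nat \<times> (nat,'k::field) nfree) set \<Rightarrow> (('x,'k) Fel \<Rightarrow> ('x,'k) Fel \<Rightarrow> ('x,'k) Fel) set" where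
  "triops Ids = {Fvdash Ids, Fdashv Ids, Fperp Ids}"

inductive_set Vsub :: "(nat \<times> (nat,'k::field) nfree) set \<Rightarrow> ('x,'k) Fel set"
  for Ids :: "(nat \<times> (nat,'k) nfree) set" where
  gen: "cls Ids (nvar (Inr x)) \<in> Vsub Ids"
| zero: "Fzero Ids \<in> Vsub Ids"
| add: "a \<in> Vsub Ids \<Longrightarrow> b \<in> Vsub Ids \<Longrightarrow> Fadd Ids a b \<in> Vsub Ids"
| smult: "a \<in> Vsub Ids \<Longrightarrow> Fsmult Ids c a \<in> Vsub Ids"
| op: "a \<in> Vsub Ids \<Longrightarrow> b \<in> Vsub Ids \<Longrightarrow> f \<in> triops Ids \<Longrightarrow> f a b \<in> Vsub Ids"

inductive_set triideal :: "(nat \<times> (nat,'k::field) nfree) set \<Rightarrow> ('x,'k) Fel set \<Rightarrow> ('x,'k) Fel set"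
  for Ids :: "(nat \<times> (nat,'k) nfree) set" and S :: "('x,'k) Fel set" where
  gen: "s \<in> S \<Longrightarrow> s \<in> triideal Ids S"
| zero: "Fzero Ids \<in> triideal Ids S"
| add: "a \<in> triideal Ids S \<Longrightarrow> b \<in> triideal Ids S \<Longrightarrow> Fadd Ids a b \<in> triideal Ids S"
| smult: "a \<in> triideal Ids S \<Longrightarrow> Fsmult Ids c a \<in> triideal Ids S"
| opL: "v \<in> Vsub Ids \<Longrightarrow> j \<in> triideal Ids S \<Longrightarrow> f \<in> triops Ids \<Longrightarrow> f v j \<in> triideal Ids S"
| opR: "v \<in> Vsub Ids \<Longrightarrow> j \<in> triideal Ids S \<Longrightarrow> f \<in> triops Ids \<Longrightarrow> f j v \<in> triideal Ids S"

inductive_set Fideal :: "(nat \<times> (nat,'k::field) nfree) set \<Rightarrow> ('x,'k) Fel set \<Rightarrow> ('x,'k) Fel set"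
  for Ids :: "(nat \<times> (nat,'k) nfree) set" and P :: "('x,'k) Fel set" where
  gen: "p \<in> P \<Longrightarrow> p \<in> Fideal Ids P"
| zero: "Fzero Ids \<in> Fideal Ids P"
| add: "a \<in> Fideal Ids P \<Longrightarrow> b \<in> Fideal Ids P \<Longrightarrow> Fadd Ids a b \<in> Fideal Ids P"
| smult: "a \<in> Fideal Ids P \<Longrightarrow> Fsmult Ids c a \<in> Fideal Ids P"
| mulL: "u \<in> Fcar Ids \<Longrightarrow> j \<in> Fideal Ids P \<Longrightarrow> Fmul Ids u j \<in> Fideal Ids P"
| mulR: "u \<in> Fcar Ids \<Longrightarrow> j \<in> Fideal Ids P \<Longrightarrow> Fmul Ids j u \<in> Fideal Ids P"

end

theory Submission imports Defs begin

abbreviation lk where "lk \<equiv> Poly_Mapping.lookup"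

lemma lookup_nsmult[simp]: "lk (nsmult c p) k = c * lk p k"
  by (simp add: nsmult_def Poly_Mapping.map.rep_eq when_def)

lemma nsmult_add: "nsmult c (p + q) = nsmult c p + nsmult c q"
  by (rule poly_mapping_eqI) (simp add: lookup_add algebra_simps)
lemma nsmult_diff: "nsmult c (p - q) = nsmult c p - nsmult c q"
  by (rule poly_mapping_eqI) (simp add: lookup_minus algebra_simps)
lemma nsmult_zero[simp]: "nsmult c 0 = 0"
  by (rule poly_mapping_eqI) simp
lemma nsmult_0[simp]: "nsmult 0 p = 0"
  by (rule poly_mapping_eqI) simp
lemma nsmult_1[simp]: "nsmult 1 p = p"
  by (rule poly_mapping_eqI) simp
lemma nsmult_nsmult[simp]: "nsmult c (nsmult d p) = nsmult (c*d) p"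
  by (rule poly_mapping_eqI) simp
lemma nsmult_addc: "nsmult (c+d) p = nsmult c p + nsmult d p"
  by (rule poly_mapping_eqI) (simp add: lookup_add algebra_simps)
lemma nsmult_neg: "nsmult (-1) p = - p"
  by (rule poly_mapping_eqI) simp
lemma nsmult_sum: "nsmult c (\<Sum>i\<in>A. f i) = (\<Sum>i\<in>A. nsmult c (f i))"
  by (induction A rule: infinite_finite_induct) (auto simp: nsmult_add)
lemma nsmult_single: "nsmult c (Poly_Mapping.single m d) = Poly_Mapping.single m (c*d)"
  by (rule poly_mapping_eqI) (simp add: lookup_single when_def)

lemma lookup_nmul: "lk (nmul p q) t = (case t of Lf _ \<Rightarrow> 0 | Nd m n \<Rightarrow> lk p m * lk q n)"
proof -
  have "lk (nmul p q) t = (\<Sum>x\<in>Poly_Mapping.keys p \<times> Poly_Mapping.keys q.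
     (if x = (case t of Nd a b \<Rightarrow> (a,b)) \<and> (\<exists>a b. t = Nd a b) then lk p (fst x) * lk q (snd x) else 0))"
    unfolding nmul_def lookup_sum
    by (rule sum.cong) (auto simp: lookup_single when_def split: mon.split if_splits)
  also have "\<dots> = (case t of Lf _ \<Rightarrow> 0 | Nd m n \<Rightarrow> lk p m * lk q n)"
    by (cases t) (auto simp: sum.delta' in_keys_iff)
  finally show ?thesis .
qed

lemma nmul_add1: "nmul (p + p') q = nmul p q + nmul p' q"
  by (rule poly_mapping_eqI) (simp add: lookup_nmul lookup_add algebra_simps split: mon.split)
lemma nmul_add2: "nmul q (p + p') = nmul q p + nmul q p'"
  by (rule poly_mapping_eqI) (simp add: lookup_nmul lookup_add algebra_simps split: mon.split)
lemma nmul_diff1: "nmul (p - p') q = nmul p q - nmul p' q"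
  by (rule poly_mapping_eqI) (simp add: lookup_nmul lookup_minus algebra_simps split: mon.split)
lemma nmul_diff2: "nmul q (p - p') = nmul q p - nmul q p'"
  by (rule poly_mapping_eqI) (simp add: lookup_nmul lookup_minus algebra_simps split: mon.split)
lemma nmul_smult1: "nmul (nsmult c p) q = nsmult c (nmul p q)"
  by (rule poly_mapping_eqI) (simp add: lookup_nmul algebra_simps split: mon.split)
lemma nmul_smult2: "nmul q (nsmult c p) = nsmult c (nmul q p)"
  by (rule poly_mapping_eqI) (simp add: lookup_nmul algebra_simps split: mon.split)
lemma nmul_zero1[simp]: "nmul 0 q = 0"
  by (rule poly_mapping_eqI) (simp add: lookup_nmul split: mon.split)
lemma nmul_zero2[simp]: "nmul q 0 = 0"
  by (rule poly_mapping_eqI) (simp add: lookup_nmul split: mon.split)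
lemma nmul_sum1: "nmul (\<Sum>i\<in>A. f i) q = (\<Sum>i\<in>A. nmul (f i) q)"
  by (induction A rule: infinite_finite_induct) (auto simp: nmul_add1)
lemma nmul_sum2: "nmul q (\<Sum>i\<in>A. f i) = (\<Sum>i\<in>A. nmul q (f i))"
  by (induction A rule: infinite_finite_induct) (auto simp: nmul_add2)
lemma nmul_single: "nmul (Poly_Mapping.single a c) (Poly_Mapping.single b d) = Poly_Mapping.single (Nd a b) (c*d)"
  by (rule poly_mapping_eqI) (auto simp: lookup_nmul lookup_single when_def split: mon.split)

lemma pm_repr: "p = (\<Sum>m\<in>Poly_Mapping.keys p. Poly_Mapping.single m (lk p m))"
  by (rule poly_mapping_eqI) (simp add: lookup_sum lookup_single when_def sum.delta in_keys_iff)

lemma neval_sup: "finite A \<Longrightarrow> Poly_Mapping.keys p \<subseteq> A \<Longrightarrow>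
   neval \<sigma> p = (\<Sum>m\<in>A. nsmult (lk p m) (evmon \<sigma> m))"
  unfolding neval_def
  by (rule sum.mono_neutral_left) (auto simp: in_keys_iff)

lemma neval_add: "neval \<sigma> (p + q) = neval \<sigma> p + neval \<sigma> q"
proof -
  let ?A = "Poly_Mapping.keys p \<union> Poly_Mapping.keys q"
  have "Poly_Mapping.keys (p+q) \<subseteq> ?A" by (rule keys_add)
  then show ?thesis
    by (simp add: neval_sup[of ?A] lookup_add nsmult_addc sum.distrib)
qed

lemma neval_smult: "neval \<sigma> (nsmult c p) = nsmult c (neval \<sigma> p)"
proof -
  have "Poly_Mapping.keys (nsmult c p) \<subseteq> Poly_Mapping.keys p" by (auto simp: in_keys_iff)
  then have "neval \<sigma> (nsmult c p) = (\<Sum>m\<in>Poly_Mapping.keys p. nsmult (lk (nsmult c p) m) (evmon \<sigma> m))"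
    by (rule neval_sup[OF finite_keys])
  then show ?thesis
    by (simp add: nsmult_sum neval_def)
qed

lemma neval_zero[simp]: "neval \<sigma> 0 = 0"
  by (simp add: neval_def)

lemma neval_neg: "neval \<sigma> (- p) = - neval \<sigma> p"
  by (metis neval_smult nsmult_neg)
lemma neval_diff: "neval \<sigma> (p - q) = neval \<sigma> p - neval \<sigma> q"
  by (metis diff_conv_add_uminus neval_add neval_neg)

lemma neval_sum: "neval \<sigma> (\<Sum>i\<in>A. f i) = (\<Sum>i\<in>A. neval \<sigma> (f i))"
  by (induction A rule: infinite_finite_induct) (auto simp: neval_add)

lemma neval_single: "neval \<sigma> (Poly_Mapping.single m c) = nsmult c (evmon \<sigma> m)"
  by (subst neval_sup[of "{m}"]) auto

lemma neval_nvar[simp]: "neval \<sigma> (nvar v) = \<sigma> v"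
  by (simp add: nvar_def neval_single)

lemma neval_nmul: "neval \<sigma> (nmul p q) = nmul (neval \<sigma> p) (neval \<sigma> q)"
proof -
  have "nmul p q = (\<Sum>m\<in>Poly_Mapping.keys p. \<Sum>n\<in>Poly_Mapping.keys q.
          Poly_Mapping.single (Nd m n) (lk p m * lk q n))"
    apply (subst pm_repr[of p], subst pm_repr[of q])
    by (simp add: nmul_sum1 nmul_sum2 nmul_single sum.swap[of _ "Poly_Mapping.keys q"])
  then have "neval \<sigma> (nmul p q) = (\<Sum>m\<in>Poly_Mapping.keys p. \<Sum>n\<in>Poly_Mapping.keys q.
          nsmult (lk p m * lk q n) (nmul (evmon \<sigma> m) (evmon \<sigma> n)))"
    by (simp add: neval_sum neval_single)
  also have "\<dots> = nmul (neval \<sigma> p) (neval \<sigma> q)"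
    by (simp add: neval_def nmul_sum1 nmul_sum2 nmul_smult1 nmul_smult2 nsmult_sum mult.commute sum.swap[of _ "Poly_Mapping.keys q"])
  finally show ?thesis .
qed

lemma evmon_comp: "neval \<tau> (evmon \<sigma> m) = evmon (neval \<tau> \<circ> \<sigma>) m"
  by (induction m) (auto simp: neval_nmul)

lemma neval_neval: "neval \<tau> (neval \<sigma> p) = neval (neval \<tau> \<circ> \<sigma>) p"
proof -
  have "neval \<tau> (neval \<sigma> p) = (\<Sum>m\<in>Poly_Mapping.keys p. nsmult (lk p m) (neval \<tau> (evmon \<sigma> m)))"
    by (simp only: neval_def[of \<sigma>] neval_sum neval_smult)
  then show ?thesis by (simp add: evmon_comp neval_def[of "neval \<tau> \<circ> \<sigma>"])
qed


lemma T_zero: "0 \<in> Tideal Ids" unfolding Tideal_def by (rule nideal.zero)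
lemma T_add: "a \<in> Tideal Ids \<Longrightarrow> b \<in> Tideal Ids \<Longrightarrow> a + b \<in> Tideal Ids"
  unfolding Tideal_def by (rule nideal.add)
lemma T_smult: "a \<in> Tideal Ids \<Longrightarrow> nsmult c a \<in> Tideal Ids"
  unfolding Tideal_def by (rule nideal.smult)
lemma T_mulL: "a \<in> Tideal Ids \<Longrightarrow> nmul f a \<in> Tideal Ids"
  unfolding Tideal_def by (rule nideal.mulL)
lemma T_mulR: "a \<in> Tideal Ids \<Longrightarrow> nmul a f \<in> Tideal Ids"
  unfolding Tideal_def by (rule nideal.mulR)
lemma T_neg: "a \<in> Tideal Ids \<Longrightarrow> - a \<in> Tideal Ids"
  by (metis T_smult nsmult_neg)
lemma T_diff: "a \<in> Tideal Ids \<Longrightarrow> b \<in> Tideal Ids \<Longrightarrow> a - b \<in> Tideal Ids"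
  by (metis T_add T_neg diff_conv_add_uminus)

lemma T_neval: "p \<in> Tideal Ids \<Longrightarrow> neval \<tau> p \<in> Tideal Ids"
  unfolding Tideal_def
proof (induction rule: nideal.induct)
  case (gen p)
  then obtain \<sigma> n \<Phi> where "p = neval \<sigma> \<Phi>" "(n, \<Phi>) \<in> Ids" by blast
  then have "neval \<tau> p = neval (neval \<tau> \<circ> \<sigma>) \<Phi>" by (simp add: neval_neval)
  then show ?case using \<open>(n, \<Phi>) \<in> Ids\<close> by (auto intro: nideal.gen)
next
  case zero then show ?case by (simp add: nideal.zero)
next
  case (add a b) then show ?case by (simp add: neval_add nideal.add)
next
  case (smult a c) then show ?case by (simp add: neval_smult nideal.smult)
next
  case (mulL a f) then show ?case by (simp add: neval_nmul nideal.mulL)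
next
  case (mulR a f) then show ?case by (simp add: neval_nmul nideal.mulR)
qed

lemma cls_eq: "cls Ids p = cls Ids q \<longleftrightarrow> p - q \<in> Tideal Ids"
proof
  assume "cls Ids p = cls Ids q"
  moreover have "p \<in> cls Ids p" by (simp add: cls_def T_zero)
  ultimately show "p - q \<in> Tideal Ids" by (simp add: cls_def)
next
  assume h: "p - q \<in> Tideal Ids"
  show "cls Ids p = cls Ids q"
  proof (rule set_eqI)
    fix r
    have "r - q = (r - p) + (p - q)" "r - p = (r - q) - (p - q)" by simp_all
    then show "r \<in> cls Ids p \<longleftrightarrow> r \<in> cls Ids q"
      using h by (metis T_add T_diff cls_def mem_Collect_eq)
  qed
qed

lemma cls_zero_iff: "cls Ids p = Fzero Ids \<longleftrightarrow> p \<in> Tideal Ids"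
  by (simp add: Fzero_def cls_eq)

lemma rep_cls: "rep (cls Ids p) - p \<in> Tideal Ids"
proof -
  have "p \<in> cls Ids p" by (simp add: cls_def T_zero)
  then have "rep (cls Ids p) \<in> cls Ids p" unfolding rep_def by (rule someI)
  then show ?thesis by (simp add: cls_def)
qed

lemma Fadd_cls[simp]: "Fadd Ids (cls Ids p) (cls Ids q) = cls Ids (p + q)"
proof -
  have "(rep (cls Ids p) + rep (cls Ids q)) - (p + q) = (rep (cls Ids p) - p) + (rep (cls Ids q) - q)"
    by simp
  then show ?thesis unfolding Fadd_def cls_eq by (metis T_add rep_cls)
qed

lemma Fsmult_cls[simp]: "Fsmult Ids c (cls Ids p) = cls Ids (nsmult c p)"
  unfolding Fsmult_def cls_eq by (metis T_smult rep_cls nsmult_diff)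

lemma Fmul_cls[simp]: "Fmul Ids (cls Ids p) (cls Ids q) = cls Ids (nmul p q)"
proof -
  let ?a = "rep (cls Ids p)" and ?b = "rep (cls Ids q)"
  have "nmul ?a ?b - nmul p q = nmul (?a - p) ?b + nmul p (?b - q)"
    by (simp add: nmul_diff1 nmul_diff2)
  then show ?thesis unfolding Fmul_def cls_eq by (metis T_add T_mulL T_mulR rep_cls)
qed

lemma phi0_add: "phi0 (p + q) = phi0 p + phi0 q" by (simp add: phi0_def neval_add)
lemma phi0_diff: "phi0 (p - q) = phi0 p - phi0 q" by (simp add: phi0_def neval_diff)
lemma phi0_smult: "phi0 (nsmult c p) = nsmult c (phi0 p)" by (simp add: phi0_def neval_smult)
lemma phi0_mul: "phi0 (nmul p q) = nmul (phi0 p) (phi0 q)" by (simp add: phi0_def neval_nmul)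
lemma phi0_zero[simp]: "phi0 0 = 0" by (simp add: phi0_def)

lemma Fphi_cls[simp]: "Fphi Ids (cls Ids p) = cls Ids (phi0 p)"
  unfolding Fphi_def cls_eq phi0_diff[symmetric] unfolding phi0_def
  by (rule T_neval) (rule rep_cls)

definition pi0 :: "('x + 'x,'k::field) nfree \<Rightarrow> ('x + 'x,'k) nfree" where
  "pi0 = neval (\<lambda>y. case y of Inl x \<Rightarrow> nvar (Inl x) | Inr x \<Rightarrow> 0)"
definition psi0 :: "('x + 'x,'k::field) nfree \<Rightarrow> ('x + 'x,'k) nfree" where
  "psi0 = neval (\<lambda>y. case y of Inl x \<Rightarrow> nvar (Inr x) | Inr x \<Rightarrow> 0)"

lemma pi0_add: "pi0 (p + q) = pi0 p + pi0 q" by (simp add: pi0_def neval_add)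
lemma pi0_diff: "pi0 (p - q) = pi0 p - pi0 q" by (simp add: pi0_def neval_diff)
lemma pi0_smult: "pi0 (nsmult c p) = nsmult c (pi0 p)" by (simp add: pi0_def neval_smult)
lemma pi0_mul: "pi0 (nmul p q) = nmul (pi0 p) (pi0 q)" by (simp add: pi0_def neval_nmul)
lemma pi0_zero[simp]: "pi0 0 = 0" by (simp add: pi0_def)
lemma pi0_sum: "pi0 (\<Sum>i\<in>A. f i) = (\<Sum>i\<in>A. pi0 (f i))" by (simp add: pi0_def neval_sum)

lemma phi0_phi0[simp]: "phi0 (phi0 p) = phi0 p"
proof -
  let ?s = "(\<lambda>y. nvar (Inl (case_sum id id y))) :: 'x + 'x \<Rightarrow> ('x + 'x,'k::field) nfree"
  have e: "neval ?s \<circ> ?s = ?s" by (rule ext) simp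
  have "neval ?s (neval ?s p) = neval ?s p" by (subst neval_neval) (subst e, rule refl)
  then show ?thesis by (simp add: phi0_def)
qed

lemma pi0_phi0[simp]: "pi0 (phi0 p) = phi0 p"
proof -
  let ?s = "(\<lambda>y. nvar (Inl (case_sum id id y))) :: 'x + 'x \<Rightarrow> ('x + 'x,'k::field) nfree"
  let ?t = "(\<lambda>y. case y of Inl x \<Rightarrow> nvar (Inl x) | Inr x \<Rightarrow> 0) :: 'x + 'x \<Rightarrow> ('x + 'x,'k::field) nfree"
  have e: "neval ?t \<circ> ?s = ?s" by (rule ext) simp
  have "neval ?t (neval ?s p) = neval ?s p" by (subst neval_neval) (subst e, rule refl)
  then show ?thesis by (simp add: phi0_def pi0_def)
qed

lemma phi0_psi0[simp]: "phi0 (psi0 p) = pi0 p"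
proof -
  let ?s = "(\<lambda>y. nvar (Inl (case_sum id id y))) :: 'x + 'x \<Rightarrow> ('x + 'x,'k::field) nfree"
  let ?t = "(\<lambda>y. case y of Inl x \<Rightarrow> nvar (Inl x) | Inr x \<Rightarrow> 0) :: 'x + 'x \<Rightarrow> ('x + 'x,'k::field) nfree"
  let ?u = "(\<lambda>y. case y of Inl x \<Rightarrow> nvar (Inr x) | Inr x \<Rightarrow> 0) :: 'x + 'x \<Rightarrow> ('x + 'x,'k::field) nfree"
  have e: "neval ?s \<circ> ?u = ?t" by (rule ext) (simp split: sum.split)
  have "neval ?s (neval ?u p) = neval ?t p" by (subst neval_neval) (subst e, rule refl)
  then show ?thesis by (simp add: phi0_def pi0_def psi0_def)
qed


lemma cls_Fcar[simp]: "cls Ids p \<in> Fcar Ids" by (simp add: Fcar_def)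
lemma FcarE: "A \<in> Fcar Ids \<Longrightarrow> (\<And>p. A = cls Ids p \<Longrightarrow> P) \<Longrightarrow> P"
  by (auto simp: Fcar_def)

lemma triops_simps[simp]: "Fvdash Ids \<in> triops Ids" "Fdashv Ids \<in> triops Ids" "Fperp Ids \<in> triops Ids"
  by (auto simp: triops_def)

lemma Fops_cls[simp]:
  "Fvdash Ids (cls Ids a) (cls Ids b) = cls Ids (nmul (phi0 a) b)"
  "Fdashv Ids (cls Ids a) (cls Ids b) = cls Ids (nmul a (phi0 b))"
  "Fperp Ids (cls Ids a) (cls Ids b) = cls Ids (nmul a b)"
  by (simp_all add: Fvdash_def Fdashv_def Fperp_def)

lemma Vsub_car: "A \<in> Vsub Ids \<Longrightarrow> A \<in> Fcar Ids"
  by (induction rule: Vsub.induct)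
     (auto simp: Fzero_def Fadd_def Fsmult_def triops_def Fvdash_def Fdashv_def Fperp_def Fmul_def)

lemma V_add: "cls Ids a \<in> Vsub Ids \<Longrightarrow> cls Ids b \<in> Vsub Ids \<Longrightarrow> cls Ids (a + b) \<in> Vsub Ids"
  by (metis Fadd_cls Vsub.add)
lemma V_smult: "cls Ids a \<in> Vsub Ids \<Longrightarrow> cls Ids (nsmult c a) \<in> Vsub Ids"
  by (metis Fsmult_cls Vsub.smult)
lemma V_zero: "cls Ids 0 \<in> Vsub Ids"
  by (metis Fzero_def Vsub.zero)
lemma V_perp: "cls Ids a \<in> Vsub Ids \<Longrightarrow> cls Ids b \<in> Vsub Ids \<Longrightarrow> cls Ids (nmul a b) \<in> Vsub Ids"
  by (metis Fops_cls(3) Vsub.op triops_simps(3))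
lemma V_vdash: "cls Ids a \<in> Vsub Ids \<Longrightarrow> cls Ids b \<in> Vsub Ids \<Longrightarrow> cls Ids (nmul (phi0 a) b) \<in> Vsub Ids"
  by (metis Fops_cls(1) Vsub.op triops_simps(1))
lemma V_dashv: "cls Ids a \<in> Vsub Ids \<Longrightarrow> cls Ids b \<in> Vsub Ids \<Longrightarrow> cls Ids (nmul a (phi0 b)) \<in> Vsub Ids"
  by (metis Fops_cls(2) Vsub.op triops_simps(2))
lemma V_sum: "(\<And>i. i \<in> A \<Longrightarrow> cls Ids (f i) \<in> Vsub Ids) \<Longrightarrow> cls Ids (\<Sum>i\<in>A. f i) \<in> Vsub Ids"
  by (induction A rule: infinite_finite_induct) (auto simp: V_zero V_add)

lemma V_evmon_psi: "cls Ids (evmon (\<lambda>y. case y of Inl x \<Rightarrow> nvar (Inr x) | Inr x \<Rightarrow> 0) m) \<in> Vsub Ids"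
proof (induction m)
  case (Lf v) then show ?case by (cases v) (auto intro: Vsub.gen V_zero)
next
  case (Nd a b) then show ?case by (simp add: V_perp)
qed

lemma V_psi: "cls Ids (psi0 p) \<in> Vsub Ids"
  unfolding psi0_def neval_def by (intro V_sum V_smult V_evmon_psi)

lemma V_prod:
  assumes "cls Ids (a - pi0 a) \<in> Vsub Ids" "cls Ids (b - pi0 b) \<in> Vsub Ids"
  shows "cls Ids (nmul a b - pi0 (nmul a b)) \<in> Vsub Ids"
proof -
  have "nmul a b - pi0 (nmul a b) =
     (nmul (a - pi0 a) (b - pi0 b) + nmul (a - pi0 a) (phi0 (psi0 b))) + nmul (phi0 (psi0 a)) (b - pi0 b)"
    by (simp add: pi0_mul nmul_diff1 nmul_diff2 algebra_simps)
  also have "cls Ids \<dots> \<in> Vsub Ids"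
    using assms by (intro V_add V_perp V_dashv V_vdash V_psi)
  finally show ?thesis .
qed

lemma V_mono: "cls Ids (Poly_Mapping.single m 1 - pi0 (Poly_Mapping.single m 1)) \<in> Vsub Ids"
proof (induction m)
  case (Lf v)
  have e: "Poly_Mapping.single (Lf v) 1 = nvar v" by (simp add: nvar_def)
  show ?case unfolding e
    by (cases v) (auto simp: pi0_def V_zero intro: Vsub.gen)
next
  case (Nd a b)
  have "Poly_Mapping.single (Nd a b) (1::'b) = nmul (Poly_Mapping.single a 1) (Poly_Mapping.single b 1)"
    by (simp add: nmul_single)
  then show ?case using V_prod[OF Nd.IH] by simp
qed

lemma V_pi: "cls Ids (p - pi0 p) \<in> Vsub Ids"
proof -
  have e: "p = (\<Sum>m\<in>Poly_Mapping.keys p. nsmult (lk p m) (Poly_Mapping.single m 1))"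
    by (subst pm_repr) (simp add: nsmult_single)
  have "p - pi0 p = (\<Sum>m\<in>Poly_Mapping.keys p. nsmult (lk p m) (Poly_Mapping.single m 1 - pi0 (Poly_Mapping.single m 1)))"
    by (subst (1 2) e) (simp add: pi0_sum pi0_smult nsmult_diff sum_subtractf)
  also have "cls Ids \<dots> \<in> Vsub Ids" by (intro V_sum V_smult V_mono)
  finally show ?thesis .
qed

definition Fpi where "Fpi Ids A = cls Ids (pi0 (rep A))"

lemma Fpi_cls[simp]: "Fpi Ids (cls Ids p) = cls Ids (pi0 p)"
  unfolding Fpi_def cls_eq pi0_diff[symmetric] unfolding pi0_def
  by (rule T_neval) (rule rep_cls)

lemma Vsub_pi: "A \<in> Vsub Ids \<Longrightarrow> Fpi Ids A = Fzero Ids"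
proof (induction rule: Vsub.induct)
  case (gen x) then show ?case by (simp add: pi0_def Fzero_def)
next
  case zero then show ?case by (simp add: Fzero_def)
next
  case (add a b)
  from add obtain p q where "a = cls Ids p" "b = cls Ids q" by (metis FcarE Vsub_car)
  with add show ?case by (simp add: pi0_add cls_zero_iff T_add)
next
  case (smult a c)
  from smult obtain p where "a = cls Ids p" by (metis FcarE Vsub_car)
  with smult show ?case by (simp add: pi0_smult cls_zero_iff T_smult)
next
  case (op a b f)
  from op obtain p q where pq: "a = cls Ids p" "b = cls Ids q" by (metis FcarE Vsub_car)
  from op pq have "pi0 p \<in> Tideal Ids" "pi0 q \<in> Tideal Ids" by (simp_all add: cls_zero_iff)
  have "f = Fvdash Ids \<or> f = Fdashv Ids \<or> f = Fperp Ids" using op(3) by (simp add: triops_def)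
  then show ?case
  proof (elim disjE)
    assume "f = Fvdash Ids" then show ?thesis using pq \<open>pi0 q \<in> Tideal Ids\<close>
      by (simp only: Fops_cls Fpi_cls pi0_mul cls_zero_iff T_mulL)
  next
    assume "f = Fdashv Ids" then show ?thesis using pq \<open>pi0 p \<in> Tideal Ids\<close>
      by (simp only: Fops_cls Fpi_cls pi0_mul cls_zero_iff T_mulR)
  next
    assume "f = Fperp Ids" then show ?thesis using pq \<open>pi0 q \<in> Tideal Ids\<close>
      by (simp only: Fops_cls Fpi_cls pi0_mul cls_zero_iff T_mulL)
  qed
qed

lemma TI_V: assumes "S \<subseteq> Vsub Ids" shows "j \<in> triideal Ids S \<Longrightarrow> j \<in> Vsub Ids"
  by (induction rule: triideal.induct) (use assms in \<open>auto intro: Vsub.intros\<close>)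

lemma TI_add: "cls Ids a \<in> triideal Ids S \<Longrightarrow> cls Ids b \<in> triideal Ids S \<Longrightarrow> cls Ids (a + b) \<in> triideal Ids S"
  by (metis Fadd_cls triideal.add)
lemma TI_smult: "cls Ids a \<in> triideal Ids S \<Longrightarrow> cls Ids (nsmult c a) \<in> triideal Ids S"
  by (metis Fsmult_cls triideal.smult)
lemma TI_zero: "cls Ids 0 \<in> triideal Ids S"
  by (metis Fzero_def triideal.zero)
lemma TI_L:
  assumes "cls Ids x \<in> Vsub Ids" "cls Ids y \<in> triideal Ids S"
  shows "cls Ids (nmul (phi0 x) y) \<in> triideal Ids S" "cls Ids (nmul x (phi0 y)) \<in> triideal Ids S"
    "cls Ids (nmul x y) \<in> triideal Ids S"
  using triideal.opL[OF assms triops_simps(1)] triideal.opL[OF assms triops_simps(2)]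
    triideal.opL[OF assms triops_simps(3)] by simp_all
lemma TI_R:
  assumes "cls Ids x \<in> Vsub Ids" "cls Ids y \<in> triideal Ids S"
  shows "cls Ids (nmul (phi0 y) x) \<in> triideal Ids S" "cls Ids (nmul y (phi0 x)) \<in> triideal Ids S"
    "cls Ids (nmul y x) \<in> triideal Ids S"
  using triideal.opR[OF assms triops_simps(1)] triideal.opR[OF assms triops_simps(2)]
    triideal.opR[OF assms triops_simps(3)] by simp_all

lemma dir2:
  assumes SV: "S \<subseteq> Vsub Ids"
  shows "j \<in> Fideal Ids (S \<union> Fphi Ids ` S) \<Longrightarrow>
    \<exists>a1 a2. cls Ids a1 \<in> triideal Ids S \<and> cls Ids a2 \<in> triideal Ids S \<and> j = cls Ids (a1 + phi0 a2)"
proof (induction rule: Fideal.induct)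
  case (gen p)
  then show ?case
  proof
    assume "p \<in> S"
    then obtain a where "p = cls Ids a" using SV by (metis FcarE Vsub_car subsetD)
    then show ?case using \<open>p \<in> S\<close> by (intro exI[of _ a] exI[of _ 0]) (auto intro: triideal.gen TI_zero)
  next
    assume "p \<in> Fphi Ids ` S"
    then obtain s where s: "s \<in> S" "p = Fphi Ids s" by blast
    then obtain a where "s = cls Ids a" using SV by (metis FcarE Vsub_car subsetD)
    then show ?case using s by (intro exI[of _ 0] exI[of _ a]) (auto intro: triideal.gen TI_zero)
  qed
next
  case zero
  then show ?case by (intro exI[of _ 0] exI[of _ 0]) (auto simp: Fzero_def intro: TI_zero)
next
  case (add a b)
  then obtain a1 a2 b1 b2 where "cls Ids a1 \<in> triideal Ids S" "cls Ids a2 \<in> triideal Ids S"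
    "a = cls Ids (a1 + phi0 a2)" "cls Ids b1 \<in> triideal Ids S" "cls Ids b2 \<in> triideal Ids S"
    "b = cls Ids (b1 + phi0 b2)" by blast
  then show ?case
    by (intro exI[of _ "a1 + b1"] exI[of _ "a2 + b2"]) (auto simp: TI_add phi0_add algebra_simps)
next
  case (smult a c)
  then obtain a1 a2 where "cls Ids a1 \<in> triideal Ids S" "cls Ids a2 \<in> triideal Ids S"
    "a = cls Ids (a1 + phi0 a2)" by blast
  then show ?case
    by (intro exI[of _ "nsmult c a1"] exI[of _ "nsmult c a2"]) (auto simp: TI_smult phi0_smult nsmult_add)
next
  case (mulL u j)
  then obtain a1 a2 where h: "cls Ids a1 \<in> triideal Ids S" "cls Ids a2 \<in> triideal Ids S"
    "j = cls Ids (a1 + phi0 a2)" by blast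
  obtain p where u: "u = cls Ids p" using mulL by (metis FcarE)
  have "nmul p (a1 + phi0 a2) = (nmul (phi0 (psi0 p)) a1 + nmul (p - pi0 p) a1 + nmul (p - pi0 p) (phi0 a2))
       + phi0 (nmul (psi0 p) a2)"
    by (simp add: phi0_mul nmul_add1 nmul_add2 nmul_diff1 nmul_diff2 algebra_simps)
  moreover have "cls Ids (nmul (phi0 (psi0 p)) a1 + nmul (p - pi0 p) a1 + nmul (p - pi0 p) (phi0 a2)) \<in> triideal Ids S"
    using h by (intro TI_add TI_L V_psi V_pi)
  moreover have "cls Ids (nmul (psi0 p) a2) \<in> triideal Ids S"
    using h by (intro TI_L V_psi)
  ultimately show ?case using h u by auto
next
  case (mulR u j)
  then obtain a1 a2 where h: "cls Ids a1 \<in> triideal Ids S" "cls Ids a2 \<in> triideal Ids S"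
    "j = cls Ids (a1 + phi0 a2)" by blast
  obtain p where u: "u = cls Ids p" using mulR by (metis FcarE)
  have "nmul (a1 + phi0 a2) p = (nmul a1 (phi0 (psi0 p)) + nmul a1 (p - pi0 p) + nmul (phi0 a2) (p - pi0 p))
       + phi0 (nmul a2 (psi0 p))"
    by (simp add: phi0_mul nmul_add1 nmul_add2 nmul_diff1 nmul_diff2 algebra_simps)
  moreover have "cls Ids (nmul a1 (phi0 (psi0 p)) + nmul a1 (p - pi0 p) + nmul (phi0 a2) (p - pi0 p)) \<in> triideal Ids S"
    using h by (intro TI_add TI_R V_psi V_pi)
  moreover have "cls Ids (nmul a2 (psi0 p)) \<in> triideal Ids S"
    using h by (intro TI_R V_psi)
  ultimately show ?case using h u by auto
qed

lemma dir1:
  assumes SV: "S \<subseteq> Vsub Ids"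
  shows "j \<in> triideal Ids S \<Longrightarrow> j \<in> Fideal Ids (S \<union> Fphi Ids ` S) \<and> Fphi Ids j \<in> Fideal Ids (S \<union> Fphi Ids ` S)"
proof (induction rule: triideal.induct)
  case (gen s) then show ?case by (auto intro: Fideal.gen)
next
  case zero
  have e: "Fphi Ids (Fzero Ids) = Fzero Ids" by (simp add: Fzero_def)
  show ?case by (metis e Fideal.zero)
next
  case (add a b)
  obtain p q where "a = cls Ids p" "b = cls Ids q" using add(1,2) TI_V[OF SV] by (metis FcarE Vsub_car)
  with add show ?case using Fideal.add by (fastforce simp: phi0_add)
next
  case (smult a c)
  obtain p where "a = cls Ids p" using smult(1) TI_V[OF SV] by (metis FcarE Vsub_car)
  with smult show ?case using Fideal.smult by (fastforce simp: phi0_smult)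
next
  case (opL v j f)
  obtain p q where pq: "v = cls Ids p" "j = cls Ids q" using opL(1,2) TI_V[OF SV] by (metis FcarE Vsub_car)
  have m: "Fmul Ids A B \<in> Fideal Ids (S \<union> Fphi Ids ` S)" if "A \<in> Fcar Ids" "B \<in> Fideal Ids (S \<union> Fphi Ids ` S)" for A B
    using Fideal.mulL that by blast
  have "Fmul Ids (cls Ids (phi0 p)) (cls Ids (phi0 q)) \<in> Fideal Ids (S \<union> Fphi Ids ` S)"
    using m[of "cls Ids (phi0 p)" "cls Ids (phi0 q)"] opL pq by simp
  moreover have "Fmul Ids (cls Ids (phi0 p)) (cls Ids q) \<in> Fideal Ids (S \<union> Fphi Ids ` S)"
    using m[of "cls Ids (phi0 p)" "cls Ids q"] opL pq by simp
  moreover have "Fmul Ids (cls Ids p) (cls Ids (phi0 q)) \<in> Fideal Ids (S \<union> Fphi Ids ` S)"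
    using m[of "cls Ids p" "cls Ids (phi0 q)"] opL pq by simp
  moreover have "Fmul Ids (cls Ids p) (cls Ids q) \<in> Fideal Ids (S \<union> Fphi Ids ` S)"
    using m[of "cls Ids p" "cls Ids q"] opL pq by simp
  ultimately show ?case using opL(3) pq by (auto simp: triops_def phi0_mul)
next
  case (opR v j f)
  obtain p q where pq: "v = cls Ids p" "j = cls Ids q" using opR(1,2) TI_V[OF SV] by (metis FcarE Vsub_car)
  have m: "Fmul Ids B A \<in> Fideal Ids (S \<union> Fphi Ids ` S)" if "A \<in> Fcar Ids" "B \<in> Fideal Ids (S \<union> Fphi Ids ` S)" for A B
    using Fideal.mulR that by blast
  have "Fmul Ids (cls Ids (phi0 q)) (cls Ids (phi0 p)) \<in> Fideal Ids (S \<union> Fphi Ids ` S)"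
    using m[of "cls Ids (phi0 p)" "cls Ids (phi0 q)"] opR pq by simp
  moreover have "Fmul Ids (cls Ids (phi0 q)) (cls Ids p) \<in> Fideal Ids (S \<union> Fphi Ids ` S)"
    using m[of "cls Ids p" "cls Ids (phi0 q)"] opR pq by simp
  moreover have "Fmul Ids (cls Ids q) (cls Ids (phi0 p)) \<in> Fideal Ids (S \<union> Fphi Ids ` S)"
    using m[of "cls Ids (phi0 p)" "cls Ids q"] opR pq by simp
  moreover have "Fmul Ids (cls Ids q) (cls Ids p) \<in> Fideal Ids (S \<union> Fphi Ids ` S)"
    using m[of "cls Ids p" "cls Ids q"] opR pq by simp
  ultimately show ?case using opR(3) pq by (auto simp: triops_def phi0_mul)
qed

theorem theorem4p1:
  fixes Ids :: "(nat \<times> (nat,'k::field) nfree) set"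
    and S :: "('x,'k) Fel set"
  assumes "\<forall>(n, \<Phi>) \<in> Ids. polylinear n \<Phi>"
    and "S \<subseteq> Vsub Ids"
  shows "triideal Ids S = Fideal Ids (S \<union> Fphi Ids ` S) \<inter> Vsub Ids"
proof
  show "triideal Ids S \<subseteq> Fideal Ids (S \<union> Fphi Ids ` S) \<inter> Vsub Ids"
    using dir1[OF assms(2)] TI_V[OF assms(2)] by blast
next
  show "Fideal Ids (S \<union> Fphi Ids ` S) \<inter> Vsub Ids \<subseteq> triideal Ids S"
  proof
    fix j assume j: "j \<in> Fideal Ids (S \<union> Fphi Ids ` S) \<inter> Vsub Ids"
    then obtain a1 a2 where h: "cls Ids a1 \<in> triideal Ids S" "cls Ids a2 \<in> triideal Ids S"
      "j = cls Ids (a1 + phi0 a2)" using dir2[OF assms(2)] by blast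
    have "Fpi Ids j = Fzero Ids" using j by (simp add: Vsub_pi)
    then have t1: "pi0 a1 + phi0 a2 \<in> Tideal Ids" using h by (simp add: pi0_add cls_zero_iff)
    have "Fpi Ids (cls Ids a1) = Fzero Ids" using TI_V[OF assms(2) h(1)] by (rule Vsub_pi)
    then have t2: "pi0 a1 \<in> Tideal Ids" by (simp add: cls_zero_iff)
    have "phi0 a2 \<in> Tideal Ids" using T_diff[OF t1 t2] by simp
    then have "j = cls Ids a1" using h(3) by (simp add: cls_eq)
    then show "j \<in> triideal Ids S" using h(1) by simp
  qed
qed

end
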